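(* For $n\ge 2$ and $d\ge0$, the set of twisted $1$-forms $\omega\in H^0(\mathbb P^n,\Omega^1_{\mathbb P^n}(d+2))$ which admit a polynomial integrating factor is Zariski closed.
   Context: $H^0(\mathbb P^n,\Omega^1_{\mathbb P^n}(d+2))$ is identified with homogeneous polynomial $1$-forms $\sum_ia_idx_i$ on $\mathbb C^{n+1}$ with $a_i$ of degree $d+1$ and $\sum_ix_ia_i=0$ (no assumption on the codimension of the zero set). A polynomial integrating factor for $\omega$ is a non-zero $P\in H^0(\mathbb P^n,\mathcal O_{\mathbb P^n}(d+2))$ (homogeneous polynomial of degree $d+2$) such that $d(\omega/P)=0$. *)

theory Defs
  imports "HOL-Analysis.Analysis"
begin

text \<open>Homogeneous polynomials of degree k in the variables x_0,...,x_n are represented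
  by their coefficient functions on exponent vectors (monomials).\<close>

definition mons :: "nat \<Rightarrow> nat \<Rightarrow> (nat \<Rightarrow> nat) set" where
  "mons n k = {\<alpha>. (\<forall>i>n. \<alpha> i = 0) \<and> (\<Sum>i\<le>n. \<alpha> i) = k}"

definition hpoly_eval :: "nat \<Rightarrow> nat \<Rightarrow> ((nat \<Rightarrow> nat) \<Rightarrow> complex) \<Rightarrow> (nat \<Rightarrow> complex) \<Rightarrow> complex" where
  "hpoly_eval n k c x = (\<Sum>\<alpha>\<in>mons n k. c \<alpha> * (\<Prod>i\<le>n. x i ^ \<alpha> i))"

definition is_hcoeffs :: "nat \<Rightarrow> nat \<Rightarrow> ((nat \<Rightarrow> nat) \<Rightarrow> complex) \<Rightarrow> bool" where
  "is_hcoeffs n k c \<longleftrightarrow> (\<forall>\<alpha>. \<alpha> \<notin> mons n k \<longrightarrow> c \<alpha> = 0)"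

text \<open>A twisted 1-form omega = sum_i a_i dx_i in H^0(P^n, Omega^1(d+2)) is given by the
  coefficients w (i, alpha) of a_i (homogeneous of degree d+1), subject to sum_i x_i a_i = 0.\<close>

definition form_coeff :: "(nat \<times> (nat \<Rightarrow> nat) \<Rightarrow> complex) \<Rightarrow> nat \<Rightarrow> (nat \<Rightarrow> nat) \<Rightarrow> complex" where
  "form_coeff w i = (\<lambda>\<alpha>. w (i, \<alpha>))"

definition twisted_form :: "nat \<Rightarrow> nat \<Rightarrow> (nat \<times> (nat \<Rightarrow> nat) \<Rightarrow> complex) \<Rightarrow> bool" where
  "twisted_form n d w \<longleftrightarrow>
     (\<forall>i \<alpha>. (i > n \<or> \<alpha> \<notin> mons n (d+1)) \<longrightarrow> w (i, \<alpha>) = 0) \<and>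
     (\<forall>x. (\<Sum>i\<le>n. x i * hpoly_eval n (d+1) (form_coeff w i) x) = 0)"

definition pderiv_at :: "nat \<Rightarrow> ((nat \<Rightarrow> complex) \<Rightarrow> complex) \<Rightarrow> (nat \<Rightarrow> complex) \<Rightarrow> complex" where
  "pderiv_at j f x = deriv (\<lambda>t. f (x(j := t))) (x j)"

text \<open>P is a polynomial integrating factor: a nonzero homogeneous polynomial of degree d+2
  such that the rational 1-form omega/P is closed, i.e. d(omega/P) = 0 on the open set {P \<noteq> 0}.\<close>

definition integrating_factor :: "nat \<Rightarrow> nat \<Rightarrow> (nat \<times> (nat \<Rightarrow> nat) \<Rightarrow> complex) \<Rightarrow> ((nat \<Rightarrow> nat) \<Rightarrow> complex) \<Rightarrow> bool" where
  "integrating_factor n d w p \<longleftrightarrow>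
     is_hcoeffs n (d+2) p \<and> (\<exists>\<alpha>. p \<alpha> \<noteq> 0) \<and>
     (\<forall>x. hpoly_eval n (d+2) p x \<noteq> 0 \<longrightarrow>
        (\<forall>i\<le>n. \<forall>j\<le>n.
           pderiv_at j (\<lambda>y. hpoly_eval n (d+1) (form_coeff w i) y / hpoly_eval n (d+2) p y) x =
           pderiv_at i (\<lambda>y. hpoly_eval n (d+1) (form_coeff w j) y / hpoly_eval n (d+2) p y) x))"

text \<open>Zariski topology on the finite-dimensional space C^I (functions vanishing off the finite
  coordinate set I): polynomial functions in the coordinates, and their common zero sets.\<close>

definition polyfun_on :: "'v set \<Rightarrow> (('v \<Rightarrow> complex) \<Rightarrow> complex) \<Rightarrow> bool" where
  "polyfun_on I f \<longleftrightarrow> (\<exists>B coef. finite B \<and>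
      (\<forall>c. f c = (\<Sum>\<beta>\<in>B. coef \<beta> * (\<Prod>v\<in>I. c v ^ \<beta> v))))"

definition zariski_closed_in :: "'v set \<Rightarrow> ('v \<Rightarrow> complex) set \<Rightarrow> bool" where
  "zariski_closed_in I S \<longleftrightarrow> (\<exists>F. (\<forall>f\<in>F. polyfun_on I f) \<and>
      S = {c. (\<forall>v. v \<notin> I \<longrightarrow> c v = 0) \<and> (\<forall>f\<in>F. f c = 0)})"

end

theory Submission
  imports Defs "Jordan_Normal_Form.Determinant" "HOL-Library.Function_Algebras"
begin


section \<open>Polynomial functions on C^I\<close>

lemma polyfun_onI_gen:
  fixes K :: "'k set"
  assumes "finite K" "\<And>c. f c = (\<Sum>k\<in>K. a k * (\<Prod>v\<in>I. c v ^ ex k v))"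
  shows "polyfun_on I f"
proof -
  define coef where "coef \<beta> = (\<Sum>k\<in>{k\<in>K. ex k = \<beta>}. a k)" for \<beta>
  have "f c = (\<Sum>\<beta>\<in>ex ` K. coef \<beta> * (\<Prod>v\<in>I. c v ^ \<beta> v))" for c
  proof -
    have "(\<Sum>\<beta>\<in>ex ` K. coef \<beta> * (\<Prod>v\<in>I. c v ^ \<beta> v))
        = (\<Sum>\<beta>\<in>ex ` K. \<Sum>k\<in>{k\<in>K. ex k = \<beta>}. a k * (\<Prod>v\<in>I. c v ^ ex k v))"
      unfolding coef_def sum_distrib_right by (intro sum.cong refl) auto
    also have "\<dots> = (\<Sum>k\<in>K. a k * (\<Prod>v\<in>I. c v ^ ex k v))"
      by (rule sum.group) (use assms(1) in auto)
    finally show ?thesis using assms(2) by simp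
  qed
  then show ?thesis unfolding polyfun_on_def using assms(1) by blast
qed

lemma polyfun_const: "polyfun_on I (\<lambda>c. a)"
  by (rule polyfun_onI_gen[where K="{()}" and a="\<lambda>_. a" and ex="\<lambda>_ _. 0"]) auto

lemma polyfun_var:
  assumes "finite I" "v0 \<in> I"
  shows "polyfun_on I (\<lambda>c. c v0)"
proof (rule polyfun_onI_gen[where K="{()}" and a="\<lambda>_. 1" and ex="\<lambda>_ v. if v = v0 then 1 else 0"])
  fix c :: "'a \<Rightarrow> complex"
  have "(\<Prod>v\<in>I. c v ^ (if v = v0 then 1 else 0)) = (\<Prod>v\<in>I. if v = v0 then c v else 1)"
    by (intro prod.cong) auto
  also have "\<dots> = c v0" using assms by (simp add: prod.delta)
  finally show "c v0 = (\<Sum>k\<in>{()}. 1 * (\<Prod>v\<in>I. c v ^ (if v = v0 then 1 else 0)))" by simp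
qed auto

lemma polyfun_add:
  assumes "polyfun_on I f" "polyfun_on I g"
  shows "polyfun_on I (\<lambda>c. f c + g c)"
proof -
  obtain B1 a1 where 1: "finite B1" "\<And>c. f c = (\<Sum>\<beta>\<in>B1. a1 \<beta> * (\<Prod>v\<in>I. c v ^ \<beta> v))"
    using assms(1) unfolding polyfun_on_def by blast
  obtain B2 a2 where 2: "finite B2" "\<And>c. g c = (\<Sum>\<beta>\<in>B2. a2 \<beta> * (\<Prod>v\<in>I. c v ^ \<beta> v))"
    using assms(2) unfolding polyfun_on_def by blast
  show ?thesis
    by (rule polyfun_onI_gen[where K="B1 <+> B2" and a="case_sum a1 a2" and ex="case_sum (\<lambda>b. b) (\<lambda>b. b)"])
       (use 1 2 in \<open>auto simp: sum.Plus o_def\<close>)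
qed

lemma polyfun_mult:
  assumes "polyfun_on I f" "polyfun_on I g"
  shows "polyfun_on I (\<lambda>c. f c * g c)"
proof -
  obtain B1 a1 where 1: "finite B1" "\<And>c. f c = (\<Sum>\<beta>\<in>B1. a1 \<beta> * (\<Prod>v\<in>I. c v ^ \<beta> v))"
    using assms(1) unfolding polyfun_on_def by blast
  obtain B2 a2 where 2: "finite B2" "\<And>c. g c = (\<Sum>\<beta>\<in>B2. a2 \<beta> * (\<Prod>v\<in>I. c v ^ \<beta> v))"
    using assms(2) unfolding polyfun_on_def by blast
  show ?thesis
  proof (rule polyfun_onI_gen[where K="B1 \<times> B2" and a="\<lambda>(b1,b2). a1 b1 * a2 b2"
        and ex="\<lambda>(b1,b2) v. b1 v + b2 v"])
    fix c
    have "f c * g c = (\<Sum>b1\<in>B1. \<Sum>b2\<in>B2. (a1 b1 * (\<Prod>v\<in>I. c v ^ b1 v)) * (a2 b2 * (\<Prod>v\<in>I. c v ^ b2 v)))"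
      by (simp add: 1 2 sum_product)
    also have "\<dots> = (\<Sum>(b1,b2)\<in>B1\<times>B2. (a1 b1 * (\<Prod>v\<in>I. c v ^ b1 v)) * (a2 b2 * (\<Prod>v\<in>I. c v ^ b2 v)))"
      by (simp add: sum.cartesian_product)
    also have "\<dots> = (\<Sum>k\<in>B1\<times>B2. (case k of (b1,b2) \<Rightarrow> a1 b1 * a2 b2) *
          (\<Prod>v\<in>I. c v ^ (case k of (b1,b2) \<Rightarrow> \<lambda>v. b1 v + b2 v) v))"
      by (intro sum.cong refl) (auto simp: power_add prod.distrib mult_ac)
    finally show "f c * g c = \<dots>" .
  qed (use 1 2 in auto)
qed

lemma polyfun_sum:
  assumes "finite S" "\<And>s. s \<in> S \<Longrightarrow> polyfun_on I (f s)"
  shows "polyfun_on I (\<lambda>c. \<Sum>s\<in>S. f s c)"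
  using assms by (induction S rule: finite_induct) (auto intro: polyfun_add polyfun_const)

lemma polyfun_prod:
  assumes "finite S" "\<And>s. s \<in> S \<Longrightarrow> polyfun_on I (f s)"
  shows "polyfun_on I (\<lambda>c. \<Prod>s\<in>S. f s c)"
  using assms by (induction S rule: finite_induct) (auto intro: polyfun_mult polyfun_const)

lemma polyfun_det:
  assumes "\<And>k l. polyfun_on I (\<lambda>c. A c k l)"
  shows "polyfun_on I (\<lambda>c. Determinant.det (Matrix.mat N N (\<lambda>(k,l). A c k l)))"
proof -
  have "polyfun_on I (\<lambda>c. \<Sum>p\<in>{p. p permutes {0..<N}}. of_int (sign p) * (\<Prod>i\<in>{0..<N}. A c i (p i)))"
    by (intro polyfun_sum polyfun_mult polyfun_const polyfun_prod assms)
       (auto simp: finite_permutations)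
  then show ?thesis by (simp add: Determinant.det_def)
qed

section \<open>Linear algebra\<close>

interpretation fv: vector_space "\<lambda>(a::complex) (f::nat\<Rightarrow>complex). (\<lambda>i. a * f i)"
  by unfold_locales (auto simp: fun_eq_iff algebra_simps)

lemma sum_fun_apply: "finite S \<Longrightarrow> (\<Sum>s\<in>S. f s) x = (\<Sum>s\<in>S. f s x)"
  by (induction S rule: finite_induct) auto

lemma LA:
  fixes r :: "'t \<Rightarrow> nat \<Rightarrow> complex" and N :: nat
  assumes dets: "\<And>\<tau>. Determinant.det (Matrix.mat N N (\<lambda>(k,l). r (\<tau> k) l)) = 0"
  shows "\<exists>P. (\<exists>l<N. P l \<noteq> 0) \<and> (\<forall>t. (\<Sum>l<N. r t l * P l) = 0)"
proof -
  define tr where "tr t = (\<lambda>l. if l < N then r t l else 0)" for t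
  define V where "V = range tr"
  obtain B where B: "B \<subseteq> V" "fv.independent B" "V \<subseteq> fv.span B"
    using fv.maximal_independent_subset by blast
  define E where "E = (\<lambda>l. (\<lambda>i. if i = l then 1 else 0::complex)) ` {..<N}"
  have VE: "V \<subseteq> fv.span E"
  proof
    fix x assume "x \<in> V"
    then obtain t where x: "x = tr t" unfolding V_def by auto
    have "x = (\<Sum>l<N. (\<lambda>i. r t l * (\<lambda>i. if i = l then 1 else 0) i))"
      by (auto simp: fun_eq_iff sum_fun_apply x tr_def if_distrib cong: if_cong)
    also have "\<dots> \<in> fv.span E"
      by (intro fv.span_sum fv.span_scale fv.span_base) (auto simp: E_def)
    finally show "x \<in> fv.span E" .
  qed
  have "finite B \<and> card B \<le> card E"
    using fv.independent_span_bound[of E B] B VE by (auto simp: E_def)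
  moreover have "card E \<le> N" unfolding E_def using card_image_le[of "{..<N}"] by simp
  ultimately have finB: "finite B" and cardB: "card B \<le> N" by auto
  obtain g where g: "bij_betw g {0..<card B} B" using ex_bij_betw_nat_finite[OF finB] by blast
  have "\<forall>b\<in>B. \<exists>t. b = tr t" using B(1) unfolding V_def by auto
  define \<tau> where "\<tau> k = (SOME t. g k = tr t)" for k
  have \<tau>: "g k = tr (\<tau> k)" if "k < card B" for k
  proof -
    have "g k \<in> B" using g that by (auto simp: bij_betw_def)
    then obtain t where "g k = tr t" using B(1) unfolding V_def by auto
    then show ?thesis unfolding \<tau>_def by (rule someI)
  qed
  let ?A = "Matrix.mat N N (\<lambda>(k,l). r (\<tau> k) l)"
  have "Determinant.det ?A = 0" by (rule dets)
  then obtain v where v: "v \<in> carrier_vec N" "v \<noteq> 0\<^sub>v N" "?A *\<^sub>v v = 0\<^sub>v N"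
    using det_0_iff_vec_prod_zero[of ?A N] by auto
  define P where "P l = v $ l" for l
  have kill: "(\<Sum>l<N. r (\<tau> k) l * P l) = 0" if "k < N" for k
  proof -
    have "(?A *\<^sub>v v) $ k = 0" using v(3) that by simp
    moreover have "(?A *\<^sub>v v) $ k = (\<Sum>l\<in>{0..<N}. r (\<tau> k) l * v $ l)"
      using that v(1) by (simp add: scalar_prod_def)
    ultimately show ?thesis by (simp add: P_def atLeast0LessThan)
  qed
  define \<phi> where "\<phi> x = (\<Sum>l<N. x l * P l)" for x :: "nat \<Rightarrow> complex"
  have sub: "fv.subspace {x. \<phi> x = 0}"
    unfolding fv.subspace_def \<phi>_def
    by (auto simp: sum.distrib distrib_right sum_distrib_left[symmetric] mult.assoc)
  have "B \<subseteq> {x. \<phi> x = 0}"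
  proof
    fix b assume "b \<in> B"
    then obtain k where k: "k < card B" "b = g k" using g
      by (metis atLeastLessThan_iff bij_betw_iff_bijections)
    have "\<phi> b = (\<Sum>l<N. r (\<tau> k) l * P l)"
      unfolding \<phi>_def k(2) \<tau>[OF k(1)] tr_def by (intro sum.cong) auto
    then show "b \<in> {x. \<phi> x = 0}" using kill[of k] k cardB by simp
  qed
  then have "fv.span B \<subseteq> {x. \<phi> x = 0}" using fv.span_minimal sub by blast
  then have "\<phi> (tr t) = 0" for t using B(3) unfolding V_def by auto
  then have "(\<Sum>l<N. r t l * P l) = 0" for t
    unfolding \<phi>_def tr_def by simp
  moreover have "\<exists>l<N. P l \<noteq> 0"
  proof (rule ccontr)
    assume "\<not> ?thesis"
    then have "v = 0\<^sub>v N" using v(1) by (auto simp: P_def)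
    then show False using v(2) by simp
  qed
  ultimately show ?thesis by blast
qed



section \<open>Polynomial functions in x, restriction to lines\<close>

inductive mpf :: "((nat \<Rightarrow> complex) \<Rightarrow> complex) \<Rightarrow> bool" where
  mpf_const: "mpf (\<lambda>x. a)"
| mpf_var: "mpf (\<lambda>x. x i)"
| mpf_add: "mpf f \<Longrightarrow> mpf g \<Longrightarrow> mpf (\<lambda>x. f x + g x)"
| mpf_mult: "mpf f \<Longrightarrow> mpf g \<Longrightarrow> mpf (\<lambda>x. f x * g x)"

lemma mpf_diff: "mpf f \<Longrightarrow> mpf g \<Longrightarrow> mpf (\<lambda>x. f x - g x)"
proof -
  assume "mpf f" "mpf g"
  then have "mpf (\<lambda>x. f x + (-1) * g x)" by (intro mpf_add mpf_mult mpf_const)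
  then show ?thesis by simp
qed

lemma mpf_sum: "finite S \<Longrightarrow> (\<And>s. s \<in> S \<Longrightarrow> mpf (f s)) \<Longrightarrow> mpf (\<lambda>x. \<Sum>s\<in>S. f s x)"
  by (induction S rule: finite_induct) (auto intro: mpf_add mpf_const)

lemma mpf_prod: "finite S \<Longrightarrow> (\<And>s. s \<in> S \<Longrightarrow> mpf (f s)) \<Longrightarrow> mpf (\<lambda>x. \<Prod>s\<in>S. f s x)"
  by (induction S rule: finite_induct) (auto intro: mpf_mult mpf_const)

lemma mpf_power: "mpf f \<Longrightarrow> mpf (\<lambda>x. f x ^ m)"
  by (induction m) (auto intro: mpf_mult mpf_const)

definition upoly :: "(complex \<Rightarrow> complex) \<Rightarrow> bool" where
  "upoly f \<longleftrightarrow> (\<exists>q. \<forall>t. f t = poly q t)"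

lemma mpf_line: "mpf f \<Longrightarrow> upoly (\<lambda>t. f (\<lambda>i. x0 i + t * y i))"
proof (induction rule: mpf.induct)
  case (mpf_const a)
  then show ?case unfolding upoly_def by (intro exI[of _ "[:a:]"]) simp
next
  case (mpf_var i)
  then show ?case unfolding upoly_def by (intro exI[of _ "[:x0 i, y i:]"]) (simp add: mult.commute)
next
  case (mpf_add f g)
  then obtain q r where "\<forall>t. f (\<lambda>i. x0 i + t * y i) = poly q t" "\<forall>t. g (\<lambda>i. x0 i + t * y i) = poly r t"
    unfolding upoly_def by blast
  then show ?case unfolding upoly_def by (intro exI[of _ "q + r"]) simp
next
  case (mpf_mult f g)
  then obtain q r where "\<forall>t. f (\<lambda>i. x0 i + t * y i) = poly q t" "\<forall>t. g (\<lambda>i. x0 i + t * y i) = poly r t"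
    unfolding upoly_def by blast
  then show ?case unfolding upoly_def by (intro exI[of _ "q * r"]) simp
qed

lemma density:
  assumes "mpf P" "mpf Q" "\<And>x. P x * Q x = 0" "Q x0 \<noteq> 0"
  shows "P y = 0"
proof -
  obtain q where q: "\<And>t. P (\<lambda>i. x0 i + t * (y i - x0 i)) = poly q t"
    using mpf_line[OF assms(1), of x0 "\<lambda>i. y i - x0 i"] unfolding upoly_def by blast
  obtain r where r: "\<And>t. Q (\<lambda>i. x0 i + t * (y i - x0 i)) = poly r t"
    using mpf_line[OF assms(2), of x0 "\<lambda>i. y i - x0 i"] unfolding upoly_def by blast
  have "\<forall>t. poly (q * r) t = 0" using assms(3) q r by (simp flip: q r)
  then have "q * r = 0" using poly_all_0_iff_0 by blast
  moreover have "r \<noteq> 0"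
  proof
    assume "r = 0"
    then have "Q (\<lambda>i. x0 i + 0 * (y i - x0 i)) = 0" using r[of 0] by simp
    moreover have "(\<lambda>i. x0 i + 0 * (y i - x0 i)) = x0" by auto
    ultimately show False using assms(4) by simp
  qed
  ultimately have "q = 0" by simp
  then have "P (\<lambda>i. x0 i + 1 * (y i - x0 i)) = 0" using q[of 1] by simp
  moreover have "(\<lambda>i. x0 i + 1 * (y i - x0 i)) = y" by auto
  ultimately show ?thesis by simp
qed

section \<open>Monomials, coefficients\<close>

definition Mon :: "nat \<Rightarrow> (nat \<Rightarrow> nat) \<Rightarrow> (nat \<Rightarrow> complex) \<Rightarrow> complex" where
  "Mon n \<alpha> x = (\<Prod>i\<le>n. x i ^ \<alpha> i)"

lemma hpoly_eval_Mon: "hpoly_eval n k c x = (\<Sum>\<alpha>\<in>mons n k. c \<alpha> * Mon n \<alpha> x)"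
  unfolding hpoly_eval_def Mon_def ..

lemma finite_mons: "finite (mons n k)"
proof -
  have "mons n k \<subseteq> {f. \<forall>x. (x \<in> {..n} \<longrightarrow> f x \<in> {..k}) \<and> (x \<notin> {..n} \<longrightarrow> f x = 0)}"
  proof (intro subsetI CollectI allI conjI impI)
    fix f x assume f: "f \<in> mons n k" and "x \<in> {..n}"
    then have "f x \<le> (\<Sum>i\<le>n. f i)" by (intro member_le_sum) auto
    then show "f x \<in> {..k}" using f by (auto simp: mons_def)
  next
    fix f x assume "f \<in> mons n k" "x \<notin> {..n}"
    then show "f x = 0" by (auto simp: mons_def)
  qed
  moreover have "finite {f. \<forall>x. (x \<in> {..n} \<longrightarrow> f x \<in> {..k}) \<and> (x \<notin> {..n} \<longrightarrow> f x = (0::nat))}"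
    by (rule finite_set_of_finite_funs) auto
  ultimately show ?thesis by (rule finite_subset)
qed

lemma mons_le: "\<alpha> \<in> mons n k \<Longrightarrow> \<alpha> i \<le> k"
proof -
  assume a: "\<alpha> \<in> mons n k"
  show ?thesis
  proof (cases "i \<le> n")
    case True
    then have "\<alpha> i \<le> (\<Sum>i\<le>n. \<alpha> i)" by (intro member_le_sum) auto
    then show ?thesis using a by (auto simp: mons_def)
  next
    case False then show ?thesis using a by (auto simp: mons_def)
  qed
qed

lemma digits_bound:
  fixes K :: nat
  assumes "\<forall>i<m. a i < K"
  shows "(\<Sum>i<m. a i * K^i) < K^m"
  using assms
proof (induction m)
  case 0 then show ?case by simp
next
  case (Suc m)
  then have "(\<Sum>i<m. a i * K^i) < K^m" by simp
  moreover have "a m + 1 \<le> K" using Suc.prems by auto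
  then have "(a m + 1) * K^m \<le> K * K^m" by (intro mult_right_mono) auto
  ultimately show ?case by (simp add: algebra_simps)
qed

lemma digits_inj:
  fixes K :: nat
  assumes "\<forall>i<m. a i < K" "\<forall>i<m. b i < K" "(\<Sum>i<m. a i * K^i) = (\<Sum>i<m. b i * K^i)"
  shows "\<forall>i<m. a i = b i"
  using assms
proof (induction m)
  case 0 then show ?case by simp
next
  case (Suc m)
  define A where "A = (\<Sum>i<m. a i * K^i)"
  define B where "B = (\<Sum>i<m. b i * K^i)"
  have pa: "\<forall>i<m. a i < K" using Suc.prems(1) by simp
  have pb: "\<forall>i<m. b i < K" using Suc.prems(2) by simp
  have A: "A < K^m" unfolding A_def using pa by (rule digits_bound)
  have B: "B < K^m" unfolding B_def using pb by (rule digits_bound)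
  have "(\<Sum>i<Suc m. a i * K^i) = A + a m * K^m" unfolding A_def by (rule sum.lessThan_Suc)
  moreover have "(\<Sum>i<Suc m. b i * K^i) = B + b m * K^m" unfolding B_def by (rule sum.lessThan_Suc)
  ultimately have eq: "A + a m * K^m = B + b m * K^m" using Suc.prems(3) by simp
  have K0: "K^m \<noteq> 0" using A by linarith
  have "(A + a m * K^m) div K^m = a m + A div K^m" by (rule div_mult_self1[OF K0])
  then have d1: "(A + a m * K^m) div K^m = a m" using div_less[OF A] by simp
  have "(B + b m * K^m) div K^m = b m + B div K^m" by (rule div_mult_self1[OF K0])
  then have d2: "(B + b m * K^m) div K^m = b m" using div_less[OF B] by simp
  have abm: "a m = b m" using d1 d2 eq by metis
  then have "A = B" using eq by simp
  then have IH: "\<forall>i<m. a i = b i" using Suc.IH[OF pa pb] unfolding A_def B_def by blast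
  show ?case
  proof (intro allI impI)
    fix i assume "i < Suc m"
    then show "a i = b i" using IH abm by (cases "i = m") auto
  qed
qed

lemma hpoly_zero_coeffs:
  assumes "\<And>x. hpoly_eval n k c x = 0" "\<beta> \<in> mons n k"
  shows "c \<beta> = 0"
proof -
  define K where "K = k + 1"
  define enc where "enc \<alpha> = (\<Sum>i<Suc n. \<alpha> i * K^i)" for \<alpha> :: "nat \<Rightarrow> nat"
  have inj: "\<alpha> = \<beta>" if "\<alpha> \<in> mons n k" "enc \<alpha> = enc \<beta>" for \<alpha>
  proof
    fix i
    show "\<alpha> i = \<beta> i"
    proof (cases "i \<le> n")
      case True
      have ab: "\<forall>i<Suc n. \<alpha> i < K" "\<forall>i<Suc n. \<beta> i < K"
        using mons_le[OF that(1)] mons_le[OF assms(2)] unfolding K_def by (simp_all add: le_imp_less_Suc)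
      have "\<forall>i<Suc n. \<alpha> i = \<beta> i" using digits_inj[OF ab] that(2) unfolding enc_def by blast
      then show ?thesis using True by simp
    next
      case False then show ?thesis using that(1) assms(2) by (auto simp: mons_def)
    qed
  qed
  define q where "q = (\<Sum>\<alpha>\<in>mons n k. monom (c \<alpha>) (enc \<alpha>))"
  have "poly q z = 0" for z
  proof -
    have pw: "(z ^ (K^i)) ^ (\<alpha> i) = z ^ (\<alpha> i * K^i)" for \<alpha> :: "nat \<Rightarrow> nat" and i
      by (metis power_mult mult.commute)
    have "Mon n \<alpha> (\<lambda>i. z ^ (K^i)) = z ^ enc \<alpha>" for \<alpha>
      unfolding Mon_def enc_def power_sum lessThan_Suc_atMost pw ..
    then have "poly q z = hpoly_eval n k c (\<lambda>i. z ^ (K^i))"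
      unfolding q_def hpoly_eval_Mon poly_sum by (simp add: poly_monom)
    then show ?thesis using assms(1) by simp
  qed
  then have "q = 0" using poly_all_0_iff_0 by blast
  then have "0 = coeff q (enc \<beta>)" by simp
  also have "\<dots> = (\<Sum>\<alpha>\<in>mons n k. if \<alpha> = \<beta> then c \<alpha> else 0)"
    unfolding q_def coeff_sum coeff_monom
  proof (intro sum.cong refl)
    fix \<alpha> assume "\<alpha> \<in> mons n k"
    then have "(enc \<alpha> = enc \<beta>) = (\<alpha> = \<beta>)" using inj by blast
    then show "(if enc \<alpha> = enc \<beta> then c \<alpha> else 0) = (if \<alpha> = \<beta> then c \<alpha> else 0)"
      by (metis)
  qed
  also have "\<dots> = c \<beta>" using assms(2) finite_mons[of n k] by (simp add: sum.delta')
  finally show ?thesis by simp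
qed

lemma hpoly_nonzero:
  assumes "is_hcoeffs n k p" "p \<alpha> \<noteq> 0"
  shows "\<exists>x. hpoly_eval n k p x \<noteq> 0"
  using hpoly_zero_coeffs[of n k p \<alpha>] assms unfolding is_hcoeffs_def by blast

section \<open>Derivatives\<close>

definition dmon :: "nat \<Rightarrow> (nat \<Rightarrow> nat) \<Rightarrow> nat \<Rightarrow> (nat \<Rightarrow> complex) \<Rightarrow> complex" where
  "dmon n \<alpha> j x = of_nat (\<alpha> j) * x j ^ (\<alpha> j - 1) * (\<Prod>i\<in>{..n}-{j}. x i ^ \<alpha> i)"

definition hder :: "nat \<Rightarrow> nat \<Rightarrow> ((nat \<Rightarrow> nat) \<Rightarrow> complex) \<Rightarrow> nat \<Rightarrow> (nat \<Rightarrow> complex) \<Rightarrow> complex" where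
  "hder n k c j x = (\<Sum>\<alpha>\<in>mons n k. c \<alpha> * dmon n \<alpha> j x)"

lemma Mon_upd: "j \<le> n \<Longrightarrow> Mon n \<alpha> (x(j := t)) = t ^ \<alpha> j * (\<Prod>i\<in>{..n}-{j}. x i ^ \<alpha> i)"
  unfolding Mon_def by (subst prod.remove[of _ j]) auto

lemma Mon_deriv:
  assumes "j \<le> n"
  shows "((\<lambda>t. Mon n \<alpha> (x(j := t))) has_field_derivative dmon n \<alpha> j x) (at (x j))"
proof -
  have "((\<lambda>t. t ^ \<alpha> j * (\<Prod>i\<in>{..n}-{j}. x i ^ \<alpha> i)) has_field_derivative
          (of_nat (\<alpha> j) * (1 * x j ^ (\<alpha> j - Suc 0))) * (\<Prod>i\<in>{..n}-{j}. x i ^ \<alpha> i)) (at (x j))"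
    by (intro DERIV_cmult_right DERIV_power DERIV_ident)
  then show ?thesis using assms by (simp add: Mon_upd dmon_def)
qed

lemma hpoly_deriv:
  assumes "j \<le> n"
  shows "((\<lambda>t. hpoly_eval n k c (x(j := t))) has_field_derivative hder n k c j x) (at (x j))"
  unfolding hpoly_eval_Mon hder_def
  by (intro DERIV_sum DERIV_cmult Mon_deriv assms)

lemma pderiv_quot:
  assumes "j \<le> n" "hpoly_eval n k2 p x \<noteq> 0"
  shows "pderiv_at j (\<lambda>y. hpoly_eval n k1 c y / hpoly_eval n k2 p y) x =
    (hder n k1 c j x * hpoly_eval n k2 p x - hpoly_eval n k1 c x * hder n k2 p j x) /
      (hpoly_eval n k2 p x * hpoly_eval n k2 p x)"
proof -
  have "((\<lambda>t. hpoly_eval n k1 c (x(j := t)) / hpoly_eval n k2 p (x(j := t))) has_field_derivative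
     (hder n k1 c j x * hpoly_eval n k2 p (x(j := x j)) - hpoly_eval n k1 c (x(j := x j)) * hder n k2 p j x) /
      (hpoly_eval n k2 p (x(j := x j)) * hpoly_eval n k2 p (x(j := x j)))) (at (x j))"
    by (rule DERIV_divide) (use hpoly_deriv[OF assms(1)] assms(2) in auto)
  then show ?thesis unfolding pderiv_at_def by (simp add: DERIV_imp_deriv)
qed

lemma mpf_Mon: "mpf (Mon n \<alpha>)"
  unfolding Mon_def by (intro mpf_prod mpf_power mpf_var) auto

lemma mpf_dmon: "mpf (dmon n \<alpha> j)"
  unfolding dmon_def by (intro mpf_prod mpf_power mpf_var mpf_mult mpf_const) auto

lemma mpf_hpoly: "mpf (hpoly_eval n k c)"
proof -
  have "mpf (\<lambda>x. \<Sum>\<alpha>\<in>mons n k. c \<alpha> * Mon n \<alpha> x)"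
    by (intro mpf_sum mpf_mult mpf_const mpf_Mon finite_mons)
  then show ?thesis unfolding hpoly_eval_Mon by simp
qed

lemma mpf_hd: "mpf (hder n k c j)"
proof -
  have "mpf (\<lambda>x. \<Sum>\<alpha>\<in>mons n k. c \<alpha> * dmon n \<alpha> j x)"
    by (intro mpf_sum mpf_mult mpf_const mpf_dmon finite_mons)
  then show ?thesis unfolding hder_def by simp
qed



definition eco :: "nat \<Rightarrow> nat \<Rightarrow> (nat \<times> (nat \<Rightarrow> nat) \<Rightarrow> complex) \<Rightarrow> (nat \<Rightarrow> complex) \<Rightarrow> nat \<Rightarrow> nat \<Rightarrow> (nat \<Rightarrow> nat) \<Rightarrow> complex" where
  "eco n d w x i j \<beta> =
     (hder n (d+1) (form_coeff w i) j x * Mon n \<beta> x - hpoly_eval n (d+1) (form_coeff w i) x * dmon n \<beta> j x)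
   - (hder n (d+1) (form_coeff w j) i x * Mon n \<beta> x - hpoly_eval n (d+1) (form_coeff w j) x * dmon n \<beta> i x)"

definition EE :: "nat \<Rightarrow> nat \<Rightarrow> (nat \<times> (nat \<Rightarrow> nat) \<Rightarrow> complex) \<Rightarrow> ((nat \<Rightarrow> nat) \<Rightarrow> complex) \<Rightarrow> nat \<Rightarrow> nat \<Rightarrow> (nat \<Rightarrow> complex) \<Rightarrow> complex" where
  "EE n d w p i j x =
     (hder n (d+1) (form_coeff w i) j x * hpoly_eval n (d+2) p x - hpoly_eval n (d+1) (form_coeff w i) x * hder n (d+2) p j x)
   - (hder n (d+1) (form_coeff w j) i x * hpoly_eval n (d+2) p x - hpoly_eval n (d+1) (form_coeff w j) x * hder n (d+2) p i x)"

lemma EE_sum: "EE n d w p i j x = (\<Sum>\<beta>\<in>mons n (d+2). p \<beta> * eco n d w x i j \<beta>)"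
proof -
  have 1: "hpoly_eval n (d+2) p x = (\<Sum>\<beta>\<in>mons n (d+2). p \<beta> * Mon n \<beta> x)"
    by (rule hpoly_eval_Mon)
  have 2: "hder n (d+2) p j x = (\<Sum>\<beta>\<in>mons n (d+2). p \<beta> * dmon n \<beta> j x)" for j
    by (rule hder_def)
  let ?A = "hder n (d+1) (form_coeff w i) j x" and ?F = "hpoly_eval n (d+1) (form_coeff w i) x"
  let ?B = "hder n (d+1) (form_coeff w j) i x" and ?G = "hpoly_eval n (d+1) (form_coeff w j) x"
  have "(\<Sum>\<beta>\<in>mons n (d+2). p \<beta> * eco n d w x i j \<beta>) =
    (\<Sum>\<beta>\<in>mons n (d+2). ?A * (p \<beta> * Mon n \<beta> x) - ?F * (p \<beta> * dmon n \<beta> j x)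
        - ?B * (p \<beta> * Mon n \<beta> x) + ?G * (p \<beta> * dmon n \<beta> i x))"
    by (intro sum.cong refl) (simp add: eco_def algebra_simps)
  also have "\<dots> = ?A * (\<Sum>\<beta>\<in>mons n (d+2). p \<beta> * Mon n \<beta> x) - ?F * (\<Sum>\<beta>\<in>mons n (d+2). p \<beta> * dmon n \<beta> j x)
        - ?B * (\<Sum>\<beta>\<in>mons n (d+2). p \<beta> * Mon n \<beta> x) + ?G * (\<Sum>\<beta>\<in>mons n (d+2). p \<beta> * dmon n \<beta> i x)"
    by (simp add: sum.distrib sum_subtractf sum_distrib_left)
  also have "\<dots> = EE n d w p i j x"
    unfolding EE_def 1 2 by (simp add: algebra_simps)
  finally show ?thesis by simp
qed

lemma mpf_EE: "mpf (EE n d w p i j)"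
proof -
  have "mpf (\<lambda>x. (hder n (d+1) (form_coeff w i) j x * hpoly_eval n (d+2) p x - hpoly_eval n (d+1) (form_coeff w i) x * hder n (d+2) p j x)
   - (hder n (d+1) (form_coeff w j) i x * hpoly_eval n (d+2) p x - hpoly_eval n (d+1) (form_coeff w j) x * hder n (d+2) p i x))"
    by (intro mpf_diff mpf_mult mpf_hd mpf_hpoly)
  then show ?thesis unfolding EE_def by simp
qed

lemma IF_iff:
  "integrating_factor n d w p \<longleftrightarrow> is_hcoeffs n (d+2) p \<and> (\<exists>\<alpha>. p \<alpha> \<noteq> 0) \<and>
     (\<forall>x. hpoly_eval n (d+2) p x \<noteq> 0 \<longrightarrow> (\<forall>i\<le>n. \<forall>j\<le>n. EE n d w p i j x = 0))"
proof -
  have key: "pderiv_at j (\<lambda>y. hpoly_eval n (d+1) (form_coeff w i) y / hpoly_eval n (d+2) p y) x =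
           pderiv_at i (\<lambda>y. hpoly_eval n (d+1) (form_coeff w j) y / hpoly_eval n (d+2) p y) x
        \<longleftrightarrow> EE n d w p i j x = 0"
    if "hpoly_eval n (d+2) p x \<noteq> 0" "i \<le> n" "j \<le> n" for x i j
    using that unfolding pderiv_quot[OF that(3) that(1)] pderiv_quot[OF that(2) that(1)] EE_def
    by (simp add: divide_cancel_right)
  show ?thesis unfolding integrating_factor_def
  proof (intro conj_cong refl iffI allI impI)
    fix x i j
    assume H: "\<forall>x. hpoly_eval n (d + 2) p x \<noteq> 0 \<longrightarrow>
           (\<forall>i\<le>n. \<forall>j\<le>n. pderiv_at j (\<lambda>y. hpoly_eval n (d + 1) (form_coeff w i) y / hpoly_eval n (d + 2) p y) x =
                         pderiv_at i (\<lambda>y. hpoly_eval n (d + 1) (form_coeff w j) y / hpoly_eval n (d + 2) p y) x)"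
      and g: "hpoly_eval n (d + 2) p x \<noteq> 0" and ij: "i \<le> n" "j \<le> n"
    show "EE n d w p i j x = 0" using key[OF g ij, THEN iffD1] H[rule_format, OF g ij] .
  next
    fix x i j
    assume H: "\<forall>x. hpoly_eval n (d + 2) p x \<noteq> 0 \<longrightarrow> (\<forall>i\<le>n. \<forall>j\<le>n. EE n d w p i j x = 0)"
      and g: "hpoly_eval n (d + 2) p x \<noteq> 0" and ij: "i \<le> n" "j \<le> n"
    show "pderiv_at j (\<lambda>y. hpoly_eval n (d + 1) (form_coeff w i) y / hpoly_eval n (d + 2) p y) x =
          pderiv_at i (\<lambda>y. hpoly_eval n (d + 1) (form_coeff w j) y / hpoly_eval n (d + 2) p y) x"
      using key[OF g ij, THEN iffD2] H[rule_format, OF g ij] .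
  qed
qed

lemma IF_EE:
  assumes "integrating_factor n d w p" "i \<le> n" "j \<le> n"
  shows "EE n d w p i j x = 0"
proof (rule ccontr)
  assume ne: "EE n d w p i j x \<noteq> 0"
  from assms(1) have A: "is_hcoeffs n (d+2) p \<and> (\<exists>\<alpha>. p \<alpha> \<noteq> 0) \<and>
     (\<forall>x. hpoly_eval n (d+2) p x \<noteq> 0 \<longrightarrow> (\<forall>i\<le>n. \<forall>j\<le>n. EE n d w p i j x = 0))"
    unfolding IF_iff .
  then have hc: "is_hcoeffs n (d+2) p" "\<exists>\<alpha>. p \<alpha> \<noteq> 0" by blast+
  have z: "\<And>x. hpoly_eval n (d+2) p x \<noteq> 0 \<Longrightarrow> EE n d w p i j x = 0"
    using A assms(2,3) by blast
  have "hpoly_eval n (d+2) p y * EE n d w p i j y = 0" for y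
    using z[of y] by (cases "hpoly_eval n (d+2) p y = 0") auto
  then have "hpoly_eval n (d+2) p y = 0" for y
    using density[OF mpf_hpoly mpf_EE _ ne] by blast
  moreover obtain \<alpha> where "p \<alpha> \<noteq> 0" using hc by blast
  then obtain y where "hpoly_eval n (d+2) p y \<noteq> 0" using hpoly_nonzero[OF hc(1)] by blast
  ultimately show False by blast
qed

section \<open>polynomiality in w\<close>

lemma polyfun_Fi:
  assumes "i \<le> n"
  shows "polyfun_on ({..n} \<times> mons n (d+1)) (\<lambda>w. hpoly_eval n (d+1) (form_coeff w i) x)"
proof -
  have "polyfun_on ({..n} \<times> mons n (d+1)) (\<lambda>w. \<Sum>\<alpha>\<in>mons n (d+1). w (i,\<alpha>) * Mon n \<alpha> x)"
    by (intro polyfun_sum polyfun_mult polyfun_const polyfun_var finite_mons)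
       (use assms finite_mons in auto)
  then show ?thesis unfolding hpoly_eval_Mon form_coeff_def by simp
qed

lemma polyfun_hdi:
  assumes "i \<le> n"
  shows "polyfun_on ({..n} \<times> mons n (d+1)) (\<lambda>w. hder n (d+1) (form_coeff w i) j x)"
proof -
  have "polyfun_on ({..n} \<times> mons n (d+1)) (\<lambda>w. \<Sum>\<alpha>\<in>mons n (d+1). w (i,\<alpha>) * dmon n \<alpha> j x)"
    by (intro polyfun_sum polyfun_mult polyfun_const polyfun_var finite_mons)
       (use assms finite_mons in auto)
  then show ?thesis unfolding hder_def form_coeff_def by simp
qed

lemma polyfun_diff:
  assumes "polyfun_on I f" "polyfun_on I g"
  shows "polyfun_on I (\<lambda>c. f c - g c)"
proof -
  have "polyfun_on I (\<lambda>c. f c + (-1) * g c)"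
    by (intro polyfun_add polyfun_mult polyfun_const assms)
  then show ?thesis by simp
qed

lemma polyfun_eco:
  assumes "i \<le> n" "j \<le> n"
  shows "polyfun_on ({..n} \<times> mons n (d+1)) (\<lambda>w. eco n d w x i j \<beta>)"
  unfolding eco_def
  by (intro polyfun_diff polyfun_mult polyfun_const polyfun_Fi polyfun_hdi assms)

theorem lemma3p6:
  fixes n d :: nat
  assumes "n \<ge> 2"
  shows "zariski_closed_in ({..n} \<times> mons n (d+1))
           {w. twisted_form n d w \<and> (\<exists>p. integrating_factor n d w p)}"
proof -
  define M2 where "M2 = mons n (d+2)"
  define I where "I = {..n} \<times> mons n (d+1)"
  define N where "N = card M2"
  obtain h where h: "bij_betw h {0..<N} M2"
    using ex_bij_betw_nat_finite[OF finite_mons[of n "d+2"]] unfolding N_def M2_def by blast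
  define row where "row w t l = (case t of (x,i,j) \<Rightarrow> if i \<le> n \<and> j \<le> n then eco n d w x i j (h l) else 0)"
    for w :: "nat \<times> (nat \<Rightarrow> nat) \<Rightarrow> complex" and t :: "(nat \<Rightarrow> complex) \<times> nat \<times> nat" and l
  define F1 where "F1 = range (\<lambda>x. \<lambda>w. \<Sum>i\<le>n. x i * hpoly_eval n (d+1) (form_coeff w i) x)"
  define F2 where "F2 = range (\<lambda>\<tau>. \<lambda>w. Determinant.det (Matrix.mat N N (\<lambda>(k,l). row w (\<tau> k) l)))"
  have pf_row: "polyfun_on I (\<lambda>w. row w t l)" for t l
  proof -
    obtain x i j where t: "t = (x,i,j)" by (cases t) auto
    show ?thesis
    proof (cases "i \<le> n \<and> j \<le> n")
      case True
      then show ?thesis unfolding row_def t I_def using polyfun_eco by auto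
    next
      case False
      then show ?thesis unfolding row_def t using polyfun_const by auto
    qed
  qed
  have pf: "\<forall>f\<in>F1 \<union> F2. polyfun_on I f"
  proof
    fix f assume "f \<in> F1 \<union> F2"
    then show "polyfun_on I f"
    proof
      assume "f \<in> F1"
      then obtain x where f: "f = (\<lambda>w. \<Sum>i\<le>n. x i * hpoly_eval n (d+1) (form_coeff w i) x)"
        unfolding F1_def by blast
      show ?thesis unfolding f I_def
        by (intro polyfun_sum polyfun_mult polyfun_const polyfun_Fi) auto
    next
      assume "f \<in> F2"
      then obtain \<tau> where f: "f = (\<lambda>w. Determinant.det (Matrix.mat N N (\<lambda>(k,l). row w (\<tau> k) l)))"
        unfolding F2_def by blast
      show ?thesis unfolding f by (rule polyfun_det) (rule pf_row)
    qed
  qed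
  have hinv: "inv_into {0..<N} h (h l) = l" if "l < N" for l
    using h that by (simp add: bij_betw_inv_into_left)
  have hM2: "h l \<in> M2" if "l < N" for l using h that by (auto simp: bij_betw_def)
  have reidx: "(\<Sum>\<beta>\<in>M2. g \<beta>) = (\<Sum>l<N. g (h l))" for g :: "(nat \<Rightarrow> nat) \<Rightarrow> complex"
    using sum.reindex_bij_betw[OF h, of g] by (simp add: atLeast0LessThan)
  have KER_iff: "(\<exists>p. integrating_factor n d w p) \<longleftrightarrow>
       (\<exists>P. (\<exists>l<N. P l \<noteq> 0) \<and> (\<forall>t. (\<Sum>l<N. row w t l * P l) = 0))" for w
  proof
    assume "\<exists>p. integrating_factor n d w p"
    then obtain p where p: "integrating_factor n d w p" by blast
    then have hc: "is_hcoeffs n (d+2) p" "\<exists>\<alpha>. p \<alpha> \<noteq> 0" unfolding IF_iff by auto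
    then obtain \<alpha> where a: "p \<alpha> \<noteq> 0" by blast
    then have aM: "\<alpha> \<in> M2" using hc(1) unfolding is_hcoeffs_def M2_def by blast
    define l where "l = inv_into {0..<N} h \<alpha>"
    have l: "l < N" "h l = \<alpha>" using h aM unfolding l_def
      by (auto simp: bij_betw_inv_into_right intro: inv_into_into[of \<alpha> h "{0..<N}", simplified]
           dest: bij_betw_imp_surj_on)
    have "(\<Sum>l<N. row w t l * p (h l)) = 0" for t
    proof -
      obtain x i j where t: "t = (x,i,j)" by (cases t) auto
      show ?thesis
      proof (cases "i \<le> n \<and> j \<le> n")
        case True
        have "(\<Sum>l<N. row w t l * p (h l)) = (\<Sum>\<beta>\<in>M2. p \<beta> * eco n d w x i j \<beta>)"
          unfolding reidx row_def t using True by (simp add: mult.commute)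
        also have "\<dots> = EE n d w p i j x" unfolding EE_sum M2_def ..
        also have "\<dots> = 0" using IF_EE[OF p] True by auto
        finally show ?thesis .
      next
        case False
        then have "row w t l = 0" for l unfolding row_def t by auto
        then show ?thesis by simp
      qed
    qed
    then show "\<exists>P. (\<exists>l<N. P l \<noteq> 0) \<and> (\<forall>t. (\<Sum>l<N. row w t l * P l) = 0)"
      using l a by (intro exI[of _ "\<lambda>l. p (h l)"]) auto
  next
    assume "\<exists>P. (\<exists>l<N. P l \<noteq> 0) \<and> (\<forall>t. (\<Sum>l<N. row w t l * P l) = 0)"
    then obtain P l0 where P: "l0 < N" "P l0 \<noteq> 0" "\<And>t. (\<Sum>l<N. row w t l * P l) = 0" by blast
    define p where "p \<alpha> = (if \<alpha> \<in> M2 then P (inv_into {0..<N} h \<alpha>) else 0)" for \<alpha>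
    have ph: "p (h l) = P l" if "l < N" for l using hinv[OF that] hM2[OF that] by (simp add: p_def)
    have "integrating_factor n d w p"
      unfolding IF_iff
    proof (intro conjI allI impI)
      show "is_hcoeffs n (d+2) p" unfolding is_hcoeffs_def p_def M2_def by simp
      show "\<exists>\<alpha>. p \<alpha> \<noteq> 0" using ph[OF P(1)] P(2) by metis
      fix x i j assume ij: "i \<le> n" "j \<le> n"
      have "EE n d w p i j x = (\<Sum>\<beta>\<in>M2. p \<beta> * eco n d w x i j \<beta>)" unfolding EE_sum M2_def ..
      also have "\<dots> = (\<Sum>l<N. row w (x,i,j) l * P l)"
        unfolding reidx row_def using ij by (intro sum.cong refl) (auto simp: ph mult.commute)
      also have "\<dots> = 0" by (rule P(3))
      finally show "EE n d w p i j x = 0" .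
    qed
    then show "\<exists>p. integrating_factor n d w p" by blast
  qed
  have det_iff: "(\<forall>f\<in>F2. f w = 0) \<longleftrightarrow>
       (\<exists>P. (\<exists>l<N. P l \<noteq> 0) \<and> (\<forall>t. (\<Sum>l<N. row w t l * P l) = 0))" for w
  proof
    assume "\<forall>f\<in>F2. f w = 0"
    then have "Determinant.det (Matrix.mat N N (\<lambda>(k,l). row w (\<tau> k) l)) = 0" for \<tau>
      unfolding F2_def by auto
    then show "\<exists>P. (\<exists>l<N. P l \<noteq> 0) \<and> (\<forall>t. (\<Sum>l<N. row w t l * P l) = 0)"
      by (rule LA)
  next
    assume "\<exists>P. (\<exists>l<N. P l \<noteq> 0) \<and> (\<forall>t. (\<Sum>l<N. row w t l * P l) = 0)"
    then obtain P l0 where P: "l0 < N" "P l0 \<noteq> 0" "\<And>t. (\<Sum>l<N. row w t l * P l) = 0" by blast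
    show "\<forall>f\<in>F2. f w = 0"
    proof
      fix f assume "f \<in> F2"
      then obtain \<tau> where f: "f = (\<lambda>w. Determinant.det (Matrix.mat N N (\<lambda>(k,l). row w (\<tau> k) l)))"
        unfolding F2_def by blast
      let ?A = "Matrix.mat N N (\<lambda>(k,l). row w (\<tau> k) l)"
      let ?v = "Matrix.vec N P"
      have "?v \<in> carrier_vec N" by simp
      moreover have "?v \<noteq> 0\<^sub>v N"
      proof
        assume "?v = 0\<^sub>v N"
        then have "?v $ l0 = 0\<^sub>v N $ l0" by simp
        then show False using P(1,2) by simp
      qed
      moreover have "?A *\<^sub>v ?v = 0\<^sub>v N"
      proof (rule eq_vecI)
        fix k assume k: "k < dim_vec (0\<^sub>v N :: complex vec)"
        then have "(?A *\<^sub>v ?v) $ k = (\<Sum>l\<in>{0..<N}. row w (\<tau> k) l * P l)"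
          by (simp add: scalar_prod_def)
        also have "\<dots> = 0" using P(3) by (simp add: atLeast0LessThan)
        finally show "(?A *\<^sub>v ?v) $ k = 0\<^sub>v N $ k" using k by simp
      qed simp
      ultimately have ex: "\<exists>v. v \<in> carrier_vec N \<and> v \<noteq> 0\<^sub>v N \<and> ?A *\<^sub>v v = 0\<^sub>v N" by blast
      have Ac: "?A \<in> carrier_mat N N" by simp
      have "Determinant.det ?A = 0"
        using det_0_iff_vec_prod_zero[OF Ac] ex by blast
      then show "f w = 0" unfolding f by simp
    qed
  qed
  have tw: "twisted_form n d w \<longleftrightarrow> (\<forall>v. v \<notin> I \<longrightarrow> w v = 0) \<and> (\<forall>f\<in>F1. f w = 0)" for w
    unfolding twisted_form_def F1_def I_def by auto
  have "{w. twisted_form n d w \<and> (\<exists>p. integrating_factor n d w p)} =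
        {c. (\<forall>v. v \<notin> I \<longrightarrow> c v = 0) \<and> (\<forall>f\<in>F1 \<union> F2. f c = 0)}"
  proof (rule Set.set_eqI)
    fix w
    show "w \<in> {w. twisted_form n d w \<and> (\<exists>p. integrating_factor n d w p)} \<longleftrightarrow>
          w \<in> {c. (\<forall>v. v \<notin> I \<longrightarrow> c v = 0) \<and> (\<forall>f\<in>F1 \<union> F2. f c = 0)}"
      unfolding mem_Collect_eq ball_Un tw[of w] KER_iff[of w] det_iff[of w] by (rule conj_assoc)
  qed
  then show ?thesis unfolding zariski_closed_in_def I_def using pf I_def by blast
qed

end
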